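(* Let $m,n\in\mathbb{N}$. Then $K_{m,n}\subseteq \mathrm{Cl}(H_{m,n})$.
   Context: Thompson's group $F$ is the group of piecewise linear homeomorphisms of $[0,1]$ with finitely many dyadic breakpoints and slopes integer powers of $2$; composition is from left to right. Writing numbers in $(0,1)$ as $.s$ with $s$ an infinite binary word, $x_0$ maps $.00\alpha\mapsto .0\alpha$, $.01\alpha\mapsto .10\alpha$, $.1\alpha\mapsto .11\alpha$, and $x_1$ maps $.0\alpha\mapsto .0\alpha$, $.100\alpha\mapsto .10\alpha$, $.101\alpha\mapsto .110\alpha$, $.11\alpha\mapsto .111\alpha$. Let $x=x_0$, $y=x_0^2x_1$, and $H_{m,n}=\langle x^m,y^n\rangle$. An element $h\in F$ has the pair of branches $u\rightarrow v$ (for finite binary words $u,v$) if $h(.u\alpha)=.v\alpha$ for every infinite binary word $\alpha$. For $H\le F$ write $u\sim_H v$ if some $h\in H$ has the pair of branches $u\rightarrow v$. The closure $\mathrm{Cl}(H)$ is the subgroup of all $f\in F$ for which there is a finite subdivision of $[0,1]$ into intervals on each of which $f$ coincides with some element of $H$; $H$ is closed if $H=\mathrm{Cl}(H)$ (intersections of closed subgroups are closed). Let $d=\gcd(m,n)$. $K_{m,n}$ is the minimal closed subgroup $K$ of $F$ such that: (a) $0^k1\sim_K 0^{k+d}1$ for all $k\in\mathbb{N}$; (b) $1^k0\sim_K 1^{k+d}0$ for all $k\in\mathbb{N}$; (c) $0^k1\sim_K 1^{d+1-k}0$ for $1\le k\le d$; (d) $0^{2k}10\sim_K 1^{1+3(n-k)}0$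 for $1\le k\le n$; (e) $0^{2k}11\sim_K 1^{2+3(n-k)}0$ for $1\le k\le n$; (f) $0^{2k-1}1\sim_K 1^{3(n-k+1)}0$ for $1\le k\le n$. *)

theory Defs
  imports Complex_Main
begin

text \<open>Finite binary words are bool lists (True = 1, False = 0); infinite binary
words are functions nat => bool.  The number .s is the binary value of s.\<close>

definition bval :: "(nat \<Rightarrow> bool) \<Rightarrow> real" where
  "bval s = (\<Sum>i. (if s i then 1 else 0) / 2 ^ Suc i)"

definition wconc :: "bool list \<Rightarrow> (nat \<Rightarrow> bool) \<Rightarrow> (nat \<Rightarrow> bool)" where
  "wconc u \<alpha> = (\<lambda>i. if i < length u then u ! i else \<alpha> (i - length u))"

definition has_branch :: "(real \<Rightarrow> real) \<Rightarrow> bool list \<Rightarrow> bool list \<Rightarrow> bool" where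
  "has_branch h u v \<longleftrightarrow> (\<forall>\<alpha>. h (bval (wconc u \<alpha>)) = bval (wconc v \<alpha>))"

definition dyadic :: "real \<Rightarrow> bool" where
  "dyadic x \<longleftrightarrow> (\<exists>(a::int) (k::nat). x = a / 2 ^ k)"

text \<open>Elements of F are represented as functions on the reals that are the identity
outside [0,1]; on [0,1] they are piecewise linear with finitely many dyadic
breakpoints and slopes integer powers of 2, fixing 0 and 1 (continuity is built in,
since the affine pieces are required on closed intervals, so they agree at breakpoints;
with positive slopes this makes f an increasing homeomorphism of [0,1]).\<close>
definition thompsonF :: "(real \<Rightarrow> real) set" where
  "thompsonF = {f. (\<forall>t. t \<notin> {0..1} \<longrightarrow> f t = t) \<and> f 0 = 0 \<and> f 1 = 1 \<and>
     (\<exists>(a::nat \<Rightarrow> real) (k::nat) (e::nat \<Rightarrow> int) (b::nat \<Rightarrow> real).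
        a 0 = 0 \<and> a k = 1 \<and> (\<forall>i<k. a i < a (Suc i)) \<and> (\<forall>i\<le>k. dyadic (a i)) \<and>
        (\<forall>i<k. \<forall>t\<in>{a i..a (Suc i)}. f t = 2 powi e i * t + b i))}"

text \<open>Composition in F is from left to right: the product f g is g \<circ> f.
Subgroups (a notion independent of the order convention):\<close>
definition is_subgroupF :: "(real \<Rightarrow> real) set \<Rightarrow> bool" where
  "is_subgroupF S \<longleftrightarrow> S \<subseteq> thompsonF \<and> id \<in> S \<and>
     (\<forall>f\<in>S. \<forall>g\<in>S. g \<circ> f \<in> S) \<and> (\<forall>f\<in>S. inv f \<in> S)"

definition genF :: "(real \<Rightarrow> real) set \<Rightarrow> (real \<Rightarrow> real) set" where
  "genF A = \<Inter>{S. is_subgroupF S \<and> A \<subseteq> S}"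

text \<open>Generators x0, x1 written out from their binary descriptions:
x0: .00a -> .0a on [0,1/4]; .01a -> .10a on [1/4,1/2]; .1a -> .11a on [1/2,1].
x1: identity on [0,1/2]; .100a -> .10a on [1/2,5/8]; .101a -> .110a on [5/8,3/4];
.11a -> .111a on [3/4,1].\<close>
definition x0 :: "real \<Rightarrow> real" where
  "x0 t = (if t < 0 \<or> t > 1 then t
           else if t \<le> 1/4 then 2 * t
           else if t \<le> 1/2 then t + 1/4
           else t / 2 + 1/2)"

definition x1 :: "real \<Rightarrow> real" where
  "x1 t = (if t < 0 \<or> t > 1 then t
           else if t \<le> 1/2 then t
           else if t \<le> 5/8 then 2 * t - 1/2
           else if t \<le> 3/4 then t + 1/8
           else t / 2 + 1/2)"

definition xF :: "real \<Rightarrow> real" where "xF = x0"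

text \<open>y = x0^2 x1 with left-to-right composition: first x0 twice, then x1.\<close>
definition yF :: "real \<Rightarrow> real" where "yF = x1 \<circ> x0 \<circ> x0"

definition Hmn :: "nat \<Rightarrow> nat \<Rightarrow> (real \<Rightarrow> real) set" where
  "Hmn m n = genF {xF ^^ m, yF ^^ n}"

definition simH :: "(real \<Rightarrow> real) set \<Rightarrow> bool list \<Rightarrow> bool list \<Rightarrow> bool" where
  "simH H u v \<longleftrightarrow> (\<exists>h\<in>H. has_branch h u v)"

definition ClF :: "(real \<Rightarrow> real) set \<Rightarrow> (real \<Rightarrow> real) set" where
  "ClF H = {f \<in> thompsonF. \<exists>(a::nat \<Rightarrow> real) (k::nat).
      a 0 = 0 \<and> a k = 1 \<and> (\<forall>i<k. a i < a (Suc i)) \<and>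
      (\<forall>i<k. \<exists>h\<in>H. \<forall>t\<in>{a i..a (Suc i)}. f t = h t)}"

definition closedF :: "(real \<Rightarrow> real) set \<Rightarrow> bool" where
  "closedF H \<longleftrightarrow> ClF H = H"

abbreviation zw :: "nat \<Rightarrow> bool list" where "zw k \<equiv> replicate k False"
abbreviation ow :: "nat \<Rightarrow> bool list" where "ow k \<equiv> replicate k True"

definition Kconds :: "nat \<Rightarrow> nat \<Rightarrow> (real \<Rightarrow> real) set \<Rightarrow> bool" where
  "Kconds m n K \<longleftrightarrow> (let d = gcd m n in
     (\<forall>k\<ge>1. simH K (zw k @ [True]) (zw (k + d) @ [True])) \<and>
     (\<forall>k\<ge>1. simH K (ow k @ [False]) (ow (k + d) @ [False])) \<and>
     (\<forall>k. 1 \<le> k \<and> k \<le> d \<longrightarrow> simH K (zw k @ [True]) (ow (d + 1 - k) @ [False])) \<and>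
     (\<forall>k. 1 \<le> k \<and> k \<le> n \<longrightarrow> simH K (zw (2*k) @ [True, False]) (ow (1 + 3*(n-k)) @ [False])) \<and>
     (\<forall>k. 1 \<le> k \<and> k \<le> n \<longrightarrow> simH K (zw (2*k) @ [True, True]) (ow (2 + 3*(n-k)) @ [False])) \<and>
     (\<forall>k. 1 \<le> k \<and> k \<le> n \<longrightarrow> simH K (zw (2*k - 1) @ [True]) (ow (3*(n-k+1)) @ [False])))"

definition Kmn :: "nat \<Rightarrow> nat \<Rightarrow> (real \<Rightarrow> real) set" where
  "Kmn m n = \<Inter>{K. is_subgroupF K \<and> closedF K \<and> Kconds m n K}"

end

theory Submission
  imports Defs
begin

lemma bval_summable: "summable (\<lambda>i. (if s i then 1 else 0) / (2::real) ^ Suc i)"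
proof (rule summable_comparison_test[where g="\<lambda>i. (1/2::real) ^ Suc i"])
  show "\<exists>N. \<forall>n\<ge>N. norm ((if s n then 1 else 0) / (2::real) ^ Suc n) \<le> (1/2) ^ Suc n"
    by (auto simp: power_divide)
  show "summable (\<lambda>i. (1/2::real) ^ Suc i)"
    using summable_geometric[of "1/2::real"] summable_ignore_initial_segment[of _ 1] by simp
qed

lemma bval_Suc: "bval s = (if s 0 then 1/2 else 0) + bval (\<lambda>i. s (Suc i)) / 2"
proof -
  define g where "g = (\<lambda>i. (if s i then 1 else 0) / (2::real) ^ Suc i)"
  have sg: "summable g" unfolding g_def by (rule bval_summable)
  have e: "(\<lambda>i. (if s (Suc i) then 1 else 0) / (2::real) ^ Suc i) = (\<lambda>i. 2 * g (Suc i))"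
    unfolding g_def by (auto simp: fun_eq_iff)
  have "bval (\<lambda>i. s (Suc i)) = (\<Sum>i. 2 * g (Suc i))"
    unfolding bval_def e ..
  also have "\<dots> = 2 * (\<Sum>i. g (Suc i))"
    using suminf_mult[of "\<lambda>i. g (Suc i)" 2] sg summable_Suc_iff by blast
  also have "(\<Sum>i. g (Suc i)) = suminf g - g 0"
    by (rule suminf_split_head[OF sg])
  finally have "bval (\<lambda>i. s (Suc i)) = 2 * (suminf g - g 0)" .
  moreover have "bval s = suminf g" unfolding bval_def g_def ..
  moreover have "g 0 = (if s 0 then 1/2 else 0)" unfolding g_def by simp
  ultimately show ?thesis by (simp add: field_simps)
qed

lemma bval_nonneg: "0 \<le> bval s"
  unfolding bval_def by (rule suminf_nonneg[OF bval_summable]) auto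

lemma bval_le1: "bval s \<le> 1"
proof -
  have g: "(\<lambda>i. (1/2::real) ^ Suc i) sums 1"
    using sums_mult[OF geometric_sums[of "1/2::real"], of "1/2"] by simp
  have "bval s \<le> (\<Sum>i. (1/2::real) ^ Suc i)"
    unfolding bval_def
    by (rule suminf_le[OF _ bval_summable sums_summable[OF g]]) (simp add: power_divide)
  then show ?thesis using sums_unique[OF g] by simp
qed

lemma wconc_Cons: "wconc (b # u) \<alpha> = (\<lambda>i. if i = 0 then b else wconc u \<alpha> (i - 1))"
  by (auto simp: wconc_def fun_eq_iff nth_Cons' less_Suc_eq_0_disj)

lemma bval_Cons: "bval (wconc (b # u) \<alpha>) = (if b then 1/2 else 0) + bval (wconc u \<alpha>) / 2"
  by (subst bval_Suc) (simp add: wconc_Cons)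

lemma wconc_append: "wconc (u @ w) \<alpha> = wconc u (wconc w \<alpha>)"
  by (auto simp: wconc_def fun_eq_iff nth_append)

lemma branch_append: "has_branch h u v \<Longrightarrow> has_branch h (u @ w) (v @ w)"
  by (simp add: has_branch_def wconc_append)

lemma branch_comp: "has_branch f u v \<Longrightarrow> has_branch g v w \<Longrightarrow> has_branch (g \<circ> f) u w"
  by (simp add: has_branch_def)

lemma branch_inv: "inj f \<Longrightarrow> has_branch f u v \<Longrightarrow> has_branch (inv f) v u"
  by (simp add: has_branch_def) (metis inv_f_f)

lemma branch_id: "has_branch id u u"
  by (simp add: has_branch_def)

lemma branch_id': "has_branch (\<lambda>a. a) u u"
  by (simp add: has_branch_def)


lemma x0_00: "has_branch x0 (False # False # w) (False # w)"
  unfolding has_branch_def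
proof
  fix \<alpha> define b where "b = bval (wconc w \<alpha>)"
  have "0 \<le> b" "b \<le> 1" unfolding b_def by (rule bval_nonneg, rule bval_le1)
  moreover have "bval (wconc (False # False # w) \<alpha>) = bval (wconc (False # False # w) \<alpha>)" "bval (wconc (False # w) \<alpha>) = bval (wconc (False # w) \<alpha>)" by simp_all
  ultimately show "x0 (bval (wconc (False # False # w) \<alpha>)) = bval (wconc (False # w) \<alpha>)"
    unfolding x0_def using \<open>0 \<le> b\<close> \<open>b \<le> 1\<close> by ((simp add: bval_Cons flip: b_def); (auto simp: field_simps))
qed

lemma x0_01: "has_branch x0 (False # True # w) (True # False # w)"
  unfolding has_branch_def
proof
  fix \<alpha> define b where "b = bval (wconc w \<alpha>)"
  have "0 \<le> b" "b \<le> 1" unfolding b_def by (rule bval_nonneg, rule bval_le1)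
  moreover have "bval (wconc (False # True # w) \<alpha>) = bval (wconc (False # True # w) \<alpha>)" "bval (wconc (True # False # w) \<alpha>) = bval (wconc (True # False # w) \<alpha>)" by simp_all
  ultimately show "x0 (bval (wconc (False # True # w) \<alpha>)) = bval (wconc (True # False # w) \<alpha>)"
    unfolding x0_def using \<open>0 \<le> b\<close> \<open>b \<le> 1\<close> by ((simp add: bval_Cons flip: b_def); (auto simp: field_simps))
qed

lemma x0_1: "has_branch x0 (True # w) (True # True # w)"
  unfolding has_branch_def
proof
  fix \<alpha> define b where "b = bval (wconc w \<alpha>)"
  have "0 \<le> b" "b \<le> 1" unfolding b_def by (rule bval_nonneg, rule bval_le1)
  moreover have "bval (wconc (True # w) \<alpha>) = bval (wconc (True # w) \<alpha>)" "bval (wconc (True # True # w) \<alpha>) = bval (wconc (True # True # w) \<alpha>)" by simp_all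
  ultimately show "x0 (bval (wconc (True # w) \<alpha>)) = bval (wconc (True # True # w) \<alpha>)"
    unfolding x0_def using \<open>0 \<le> b\<close> \<open>b \<le> 1\<close> by ((simp add: bval_Cons flip: b_def); (auto simp: field_simps))
qed

lemma x1_0: "has_branch x1 (False # w) (False # w)"
  unfolding has_branch_def
proof
  fix \<alpha> define b where "b = bval (wconc w \<alpha>)"
  have "0 \<le> b" "b \<le> 1" unfolding b_def by (rule bval_nonneg, rule bval_le1)
  moreover have "bval (wconc (False # w) \<alpha>) = bval (wconc (False # w) \<alpha>)" "bval (wconc (False # w) \<alpha>) = bval (wconc (False # w) \<alpha>)" by simp_all
  ultimately show "x1 (bval (wconc (False # w) \<alpha>)) = bval (wconc (False # w) \<alpha>)"
    unfolding x1_def using \<open>0 \<le> b\<close> \<open>b \<le> 1\<close> by ((simp add: bval_Cons flip: b_def); (auto simp: field_simps))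
qed

lemma x1_100: "has_branch x1 (True # False # False # w) (True # False # w)"
  unfolding has_branch_def
proof
  fix \<alpha> define b where "b = bval (wconc w \<alpha>)"
  have "0 \<le> b" "b \<le> 1" unfolding b_def by (rule bval_nonneg, rule bval_le1)
  moreover have "bval (wconc (True # False # False # w) \<alpha>) = bval (wconc (True # False # False # w) \<alpha>)" "bval (wconc (True # False # w) \<alpha>) = bval (wconc (True # False # w) \<alpha>)" by simp_all
  ultimately show "x1 (bval (wconc (True # False # False # w) \<alpha>)) = bval (wconc (True # False # w) \<alpha>)"
    unfolding x1_def using \<open>0 \<le> b\<close> \<open>b \<le> 1\<close> by ((simp add: bval_Cons flip: b_def); (auto simp: field_simps))
qed

lemma x1_101: "has_branch x1 (True # False # True # w) (True # True # False # w)"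
  unfolding has_branch_def
proof
  fix \<alpha> define b where "b = bval (wconc w \<alpha>)"
  have "0 \<le> b" "b \<le> 1" unfolding b_def by (rule bval_nonneg, rule bval_le1)
  moreover have "bval (wconc (True # False # True # w) \<alpha>) = bval (wconc (True # False # True # w) \<alpha>)" "bval (wconc (True # True # False # w) \<alpha>) = bval (wconc (True # True # False # w) \<alpha>)" by simp_all
  ultimately show "x1 (bval (wconc (True # False # True # w) \<alpha>)) = bval (wconc (True # True # False # w) \<alpha>)"
    unfolding x1_def using \<open>0 \<le> b\<close> \<open>b \<le> 1\<close> by ((simp add: bval_Cons flip: b_def); (auto simp: field_simps))
qed

lemma x1_11: "has_branch x1 (True # True # w) (True # True # True # w)"
  unfolding has_branch_def
proof
  fix \<alpha> define b where "b = bval (wconc w \<alpha>)"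
  have "0 \<le> b" "b \<le> 1" unfolding b_def by (rule bval_nonneg, rule bval_le1)
  moreover have "bval (wconc (True # True # w) \<alpha>) = bval (wconc (True # True # w) \<alpha>)" "bval (wconc (True # True # True # w) \<alpha>) = bval (wconc (True # True # True # w) \<alpha>)" by simp_all
  ultimately show "x1 (bval (wconc (True # True # w) \<alpha>)) = bval (wconc (True # True # True # w) \<alpha>)"
    unfolding x1_def using \<open>0 \<le> b\<close> \<open>b \<le> 1\<close> by ((simp add: bval_Cons flip: b_def); (auto simp: field_simps))
qed


definition cone :: "int \<Rightarrow> bool list" where
  "cone j = (if j \<le> 0 then replicate (nat (1 - j)) False @ [True] else replicate (nat j) True @ [False])"

lemma x0_cone: "has_branch x0 (cone j) (cone (j + 1))"
proof -
  consider "j \<le> -1" | "j = 0" | "j \<ge> 1" by linarith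
  then show ?thesis
  proof cases
    case 1
    have a: "nat (1 - j) = Suc (Suc (nat (-1 - j)))" "nat (1 - (j+1)) = Suc (nat (-1 - j))" using 1 by auto
    show ?thesis unfolding cone_def using 1 a x0_00 by simp
  next
    case 2
    then show ?thesis unfolding cone_def using x0_01[of "[]"] by simp
  next
    case 3
    have a: "nat j = Suc (nat (j - 1))" "nat (j+1) = Suc (Suc (nat (j - 1)))" using 3 by auto
    show ?thesis unfolding cone_def using 3 a x0_1 by simp
  qed
qed

lemma x0pow_cone: "has_branch (x0 ^^ k) (cone j) (cone (j + int k))"
proof (induction k)
  case 0
  then show ?case by (simp add: branch_id')
next
  case (Suc k)
  have "has_branch (x0 \<circ> x0 ^^ k) (cone j) (cone (j + int k + 1))"
    using branch_comp[OF Suc x0_cone] .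
  moreover have "j + int k + 1 = j + int (Suc k)" by simp
  ultimately show ?case by (simp only: funpow.simps(2))
qed

lemma y_br: "has_branch x0 u v1 \<Longrightarrow> has_branch x0 v1 v2 \<Longrightarrow> has_branch x1 v2 v \<Longrightarrow> has_branch yF u v"
  by (simp add: has_branch_def yF_def)

lemma y_pos: assumes "j \<ge> 0" shows "has_branch yF (cone j) (cone (j + 3))"
proof -
  have a: "nat (j+2) = Suc (Suc (nat j))" "nat (j+3) = Suc (Suc (Suc (nat j)))" using assms by auto
  have e: "cone (j+2) = True # True # (ow (nat j) @ [False])" "cone (j+3) = True # True # True # (ow (nat j) @ [False])"
    unfolding cone_def using assms a by simp_all
  have "has_branch x1 (cone (j+2)) (cone (j + 3))"
    unfolding e by (rule x1_11)
  then have "has_branch x1 (cone (j+1+1)) (cone (j + 3))" by (simp add: add.assoc)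
  then show ?thesis using y_br x0_cone x0_cone by blast
qed

lemma y_neg: assumes "j \<le> -2" shows "has_branch yF (cone j) (cone (j + 2))"
proof -
  have a: "nat (1 - (j+2)) = Suc (nat (-2 - j))" using assms by auto
  have e: "cone (j+2) = False # (zw (nat (-2 - j)) @ [True])"
    unfolding cone_def using assms a by simp
  have "has_branch x1 (cone (j+2)) (cone (j + 2))"
    unfolding e by (rule x1_0)
  then have "has_branch x1 (cone (j+1+1)) (cone (j + 2))" by (simp add: add.assoc)
  then show ?thesis using y_br x0_cone x0_cone by blast
qed

lemma y_m1F: "has_branch yF (cone (-1) @ [False]) (cone 1)"
proof -
  have "has_branch x1 (cone (-1+1+1) @ [False]) (cone 1)"
    unfolding cone_def using x1_100[of "[]"] by simp
  then show ?thesis using y_br branch_append[OF x0_cone] by blast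
qed

lemma y_m1T: "has_branch yF (cone (-1) @ [True]) (cone 2)"
proof -
  have "has_branch x1 (cone (-1+1+1) @ [True]) (cone 2)"
    unfolding cone_def using x1_101[of "[]"] by (simp add: numeral_eq_Suc)
  then show ?thesis using y_br branch_append[OF x0_cone] by blast
qed

lemma ypow_pos: "j \<ge> 0 \<Longrightarrow> has_branch (yF ^^ k) (cone j) (cone (j + 3 * int k))"
proof (induction k arbitrary: j)
  case 0
  then show ?case by (simp add: branch_id')
next
  case (Suc k)
  have "has_branch (yF ^^ k \<circ> yF) (cone j) (cone (j + 3 + 3 * int k))"
    using branch_comp[OF y_pos[OF Suc.prems] Suc.IH[of "j+3"]] Suc.prems by simp
  moreover have "j + 3 + 3 * int k = j + 3 * int (Suc k)" "j + 2 + 2 * int k = j + 2 * int (Suc k)" by simp_all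
  ultimately show ?case by (simp only: funpow_Suc_right)
qed

lemma ypow_neg: "j + 2 * int k \<le> 0 \<Longrightarrow> has_branch (yF ^^ k) (cone j) (cone (j + 2 * int k))"
proof (induction k arbitrary: j)
  case 0
  then show ?case by (simp add: branch_id')
next
  case (Suc k)
  have "has_branch (yF ^^ k \<circ> yF) (cone j) (cone (j + 2 + 2 * int k))"
    using branch_comp[OF y_neg Suc.IH[of "j+2"]] Suc.prems by simp
  moreover have "j + 3 + 3 * int k = j + 3 * int (Suc k)" "j + 2 + 2 * int k = j + 2 * int (Suc k)" by simp_all
  ultimately show ?case by (simp only: funpow_Suc_right)
qed

definition goodH :: "nat \<Rightarrow> nat \<Rightarrow> (real \<Rightarrow> real) set \<Rightarrow> bool" where
  "goodH m n H \<longleftrightarrow> id \<in> H \<and> (\<forall>f\<in>H. \<forall>g\<in>H. g \<circ> f \<in> H) \<and> (\<forall>f\<in>H. inv f \<in> H) \<and>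
     (\<forall>f\<in>H. inj f) \<and> xF ^^ m \<in> H \<and> yF ^^ n \<in> H"

definition Rel :: "(real \<Rightarrow> real) set \<Rightarrow> int \<Rightarrow> int \<Rightarrow> bool" where
  "Rel H j j' \<longleftrightarrow> simH H (cone j) (cone j')"

context
  fixes m n H assumes gH: "goodH m n H"
begin

lemma Rel_refl: "Rel H j j"
  using gH branch_id unfolding goodH_def Rel_def simH_def by blast

lemma Rel_sym: "Rel H j j' \<Longrightarrow> Rel H j' j"
  using gH branch_inv unfolding goodH_def Rel_def simH_def by blast

lemma Rel_trans: "Rel H j j' \<Longrightarrow> Rel H j' j'' \<Longrightarrow> Rel H j j''"
  using gH branch_comp unfolding goodH_def Rel_def simH_def by blast

lemma Rel_shift_all:
  assumes "\<And>j. Rel H j (j + a)" shows "Rel H j (j + a * t)"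
proof -
  have pos: "Rel H j (j + a * int k)" for j k
  proof (induction k arbitrary: j)
    case 0 then show ?case using Rel_refl by simp
  next
    case (Suc k)
    have "Rel H j (j + a)" by (rule assms)
    moreover have "Rel H (j + a) (j + a + a * int k)" by (rule Suc.IH)
    ultimately show ?case using Rel_trans by (simp add: algebra_simps)
  qed
  show ?thesis
  proof (cases "t \<ge> 0")
    case True
    then show ?thesis using pos[of j "nat t"] by simp
  next
    case False
    have "Rel H (j + a * t) (j + a * t + a * int (nat (- t)))" by (rule pos)
    then show ?thesis using False Rel_sym by (simp add: algebra_simps)
  qed
qed

lemma Rel_m: "Rel H j (j + int m * t)"
proof (rule Rel_shift_all)
  fix j show "Rel H j (j + int m)"
    using gH x0pow_cone unfolding goodH_def Rel_def simH_def xF_def by blast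
qed

lemma Rel_3n: "j \<ge> 0 \<Longrightarrow> Rel H j (j + 3 * int n)"
  using gH ypow_pos unfolding goodH_def Rel_def simH_def by blast

lemma Rel_2n: "j + 2 * int n \<le> 0 \<Longrightarrow> Rel H j (j + 2 * int n)"
  using gH ypow_neg unfolding goodH_def Rel_def simH_def by blast

lemma Rel_n1: assumes m1: "m \<ge> 1" shows "Rel H j (j + int n)"
proof -
  define A where "A = \<bar>j\<bar>"
  define J where "J = j + int m * A"
  have "1 * \<bar>j\<bar> \<le> int m * \<bar>j\<bar>" by (rule mult_right_mono) (use m1 in auto)
  then have J0: "J \<ge> 0" unfolding J_def A_def by linarith
  define B where "B = J + 3 * int n"
  define K where "K = J + 3 * int n - int m * B"
  have "1 * B \<le> int m * B" by (rule mult_right_mono) (use m1 J0 B_def in auto)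
  then have K0: "K \<le> 0" unfolding K_def B_def by simp
  have 1: "Rel H j J" unfolding J_def by (rule Rel_m)
  have 2: "Rel H J (J + 3 * int n)" using J0 by (rule Rel_3n)
  have 3: "Rel H (J + 3 * int n) K" unfolding K_def using Rel_m[of "J + 3 * int n" "- B"] by simp
  have 4: "Rel H K (K - 2 * int n)" using Rel_2n[of "K - 2 * int n"] K0 Rel_sym by simp
  have 5: "Rel H (K - 2 * int n) (j + int n)"
    using Rel_m[of "K - 2 * int n" "B - A"] unfolding K_def J_def by (simp add: algebra_simps)
  show ?thesis using 1 2 3 4 5 Rel_trans by blast
qed

lemma Rel_d: assumes m1: "m \<ge> 1" shows "Rel H j (j + int (gcd m n))"
proof -
  obtain u v where uv: "u * int m + v * int n = gcd (int m) (int n)" using bezout_int by blast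
  have n: "Rel H j (j + int n * t)" for j t
    by (rule Rel_shift_all) (use Rel_n1[OF m1] in simp)
  have "Rel H j (j + int m * u)" by (rule Rel_m)
  moreover have "Rel H (j + int m * u) (j + int m * u + int n * v)" by (rule n)
  ultimately have "Rel H j (j + int m * u + int n * v)" by (rule Rel_trans)
  moreover have "j + int m * u + int n * v = j + int (gcd m n)"
    using uv by (simp add: algebra_simps)
  ultimately show ?thesis by simp
qed

lemma Kconds_good: assumes m1: "m \<ge> 1" shows "Kconds m n H"
proof -
  define d where "d = gcd m n"
  have Rd: "Rel H j (j + int d)" for j unfolding d_def by (rule Rel_d[OF m1])
  have ca: "zw k @ [True] = cone (1 - int k)" if "k \<ge> 1" for k
    using that unfolding cone_def by simp
  have cb: "ow k @ [False] = cone (int k)" if "k \<ge> 1" for k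
    using that unfolding cone_def by simp
  have A: "simH H (zw k @ [True]) (zw (k + d) @ [True])" if "k \<ge> 1" for k
  proof -
    have "Rel H (1 - int k - int d) (1 - int k - int d + int d)" by (rule Rd)
    moreover have "1 - int k - int d = 1 - int (k + d)" by simp
    ultimately have "Rel H (1 - int (k + d)) (1 - int k)" by simp
    then show ?thesis using ca[of k] ca[of "k+d"] that Rel_sym unfolding Rel_def by simp
  qed
  have B: "simH H (ow k @ [False]) (ow (k + d) @ [False])" if "k \<ge> 1" for k
    using Rd[of "int k"] cb[of k] cb[of "k+d"] that unfolding Rel_def by simp
  have C: "simH H (zw k @ [True]) (ow (d + 1 - k) @ [False])" if "1 \<le> k" "k \<le> d" for k
  proof -
    have "Rel H (1 - int k) (1 - int k + int d)" by (rule Rd)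
    moreover have "1 - int k + int d = int (d + 1 - k)" using that by simp
    ultimately show ?thesis using ca[of k] cb[of "d + 1 - k"] that unfolding Rel_def by simp
  qed
  have yn: "yF ^^ n \<in> H" using gH unfolding goodH_def by blast
  have split: "yF ^^ n = yF ^^ (n - k) \<circ> (yF \<circ> yF ^^ (k - 1))" if "1 \<le> k" "k \<le> n" for k
  proof -
    have "n = (n - k) + (Suc 0 + (k - 1))" using that by simp
    then have "yF ^^ n = yF ^^ (n - k) \<circ> (yF ^^ (Suc 0) \<circ> yF ^^ (k - 1))"
      by (metis funpow_add)
    then show ?thesis by simp
  qed
  have D: "simH H (zw (2*k) @ [True, False]) (ow (1 + 3*(n-k)) @ [False])" if "1 \<le> k" "k \<le> n" for k
  proof -
    have e1: "zw (2*k) @ [True, False] = cone (1 - 2 * int k) @ [False]" unfolding cone_def using that by simp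
    have e2: "ow (1 + 3*(n-k)) @ [False] = cone (1 + 3 * int (n - k))" using cb[of "1 + 3*(n-k)"] by simp
    have b1: "has_branch (yF ^^ (k-1)) (cone (1 - 2 * int k) @ [False]) (cone (-1) @ [False])"
      using branch_append[OF ypow_neg[of "1 - 2 * int k" "k - 1"]] that by (simp add: of_nat_diff)
    have b3: "has_branch (yF ^^ (n-k)) (cone 1) (cone (1 + 3 * int (n - k)))"
      using ypow_pos[of 1] by simp
    have "has_branch (yF ^^ (n - k) \<circ> (yF \<circ> yF ^^ (k - 1))) (cone (1 - 2 * int k) @ [False]) (cone (1 + 3 * int (n - k)))"
      using branch_comp[OF branch_comp[OF b1 y_m1F] b3] .
    then show ?thesis using yn split[OF that] e1 e2 unfolding simH_def by metis
  qed
  have E: "simH H (zw (2*k) @ [True, True]) (ow (2 + 3*(n-k)) @ [False])" if "1 \<le> k" "k \<le> n" for k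
  proof -
    have e1: "zw (2*k) @ [True, True] = cone (1 - 2 * int k) @ [True]" unfolding cone_def using that by simp
    have e2: "ow (2 + 3*(n-k)) @ [False] = cone (2 + 3 * int (n - k))" using cb[of "2 + 3*(n-k)"] by simp
    have b1: "has_branch (yF ^^ (k-1)) (cone (1 - 2 * int k) @ [True]) (cone (-1) @ [True])"
      using branch_append[OF ypow_neg[of "1 - 2 * int k" "k - 1"]] that by (simp add: of_nat_diff)
    have b3: "has_branch (yF ^^ (n-k)) (cone 2) (cone (2 + 3 * int (n - k)))"
      using ypow_pos[of 2] by simp
    have "has_branch (yF ^^ (n - k) \<circ> (yF \<circ> yF ^^ (k - 1))) (cone (1 - 2 * int k) @ [True]) (cone (2 + 3 * int (n - k)))"
      using branch_comp[OF branch_comp[OF b1 y_m1T] b3] .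
    then show ?thesis using yn split[OF that] e1 e2 unfolding simH_def by metis
  qed
  have Fc: "simH H (zw (2*k - 1) @ [True]) (ow (3*(n-k+1)) @ [False])" if "1 \<le> k" "k \<le> n" for k
  proof -
    have e1: "zw (2*k - 1) @ [True] = cone (2 - 2 * int k)" unfolding cone_def using that by (simp add: nat_diff_distrib)
    have e2: "ow (3*(n-k+1)) @ [False] = cone (3 * int (n - k + 1))" using cb[of "3*(n-k+1)"] by simp
    have b1: "has_branch (yF ^^ (k-1)) (cone (2 - 2 * int k)) (cone 0)"
      using ypow_neg[of "2 - 2 * int k" "k - 1"] that by (simp add: of_nat_diff)
    have b3: "has_branch (yF ^^ (n-k) \<circ> yF) (cone 0) (cone (3 * int (n - k + 1)))"
      using branch_comp[OF y_pos[of 0, simplified] ypow_pos[of 3 "n-k", simplified]] by (simp add: algebra_simps)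
    have "has_branch ((yF ^^ (n - k) \<circ> yF) \<circ> yF ^^ (k - 1)) (cone (2 - 2 * int k)) (cone (3 * int (n - k + 1)))"
      using branch_comp[OF b1 b3] .
    then show ?thesis using yn split[OF that] e1 e2 unfolding simH_def by (metis comp_assoc)
  qed
  show ?thesis unfolding Kconds_def Let_def d_def[symmetric]
    using A B C D E Fc by blast
qed

end



lemma pow2_pos: "0 < (2::real) powi e"
  by (simp add: power_int_def)

lemma pow2_inv: "(2::real) powi (-e) * 2 powi e = 1"
  by (simp add: power_int_minus)

lemma pow2_add: "(2::real) powi (e + e') = 2 powi e * 2 powi e'"
  by (simp add: power_int_add)

section \<open>dyadic numbers\<close>

lemma dyadic_0: "dyadic 0" unfolding dyadic_def by (rule exI[of _ 0], rule exI[of _ 0]) simp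
lemma dyadic_1: "dyadic 1" unfolding dyadic_def by (rule exI[of _ 1], rule exI[of _ 0]) simp

lemma dyadic_add: assumes "dyadic x" "dyadic y" shows "dyadic (x + y)"
proof -
  obtain p k q l where x: "x = real_of_int p / 2 ^ k" and y: "y = real_of_int q / 2 ^ l" using assms unfolding dyadic_def by blast
  have "x + y = real_of_int (p * 2 ^ l + q * 2 ^ k) / 2 ^ (k + l)"
    unfolding x y by (simp add: field_simps power_add)
  then show ?thesis unfolding dyadic_def by blast
qed

lemma dyadic_uminus: assumes "dyadic x" shows "dyadic (- x)"
proof -
  obtain p k where x: "x = real_of_int p / 2 ^ k" using assms unfolding dyadic_def by blast
  have "- x = real_of_int (- p) / 2 ^ k" unfolding x by simp
  then show ?thesis unfolding dyadic_def by blast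
qed

lemma dyadic_diff: "dyadic x \<Longrightarrow> dyadic y \<Longrightarrow> dyadic (x - y)"
  using dyadic_add[of x "- y"] dyadic_uminus by simp

lemma dyadic_pow: assumes "dyadic x" shows "dyadic (2 powi e * x)"
proof -
  obtain p k where x: "x = real_of_int p / 2 ^ k" using assms unfolding dyadic_def by blast
  show ?thesis
  proof (cases "e \<ge> 0")
    case True
    have "(2::real) powi e = 2 ^ nat e" using True by (simp add: power_int_def)
    then have "2 powi e * x = real_of_int (p * 2 ^ nat e) / 2 ^ k" unfolding x by simp
    then show ?thesis unfolding dyadic_def by blast
  next
    case False
    have "(2::real) powi e = 1 / 2 ^ nat (- e)" using False by (simp add: power_int_def power_one_over)
    then have "2 powi e * x = real_of_int p / 2 ^ (k + nat (- e))" unfolding x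
      by (simp add: power_add)
    then show ?thesis unfolding dyadic_def by blast
  qed
qed

lemma dyadic_pow_iff: "dyadic (2 powi e * x) \<longleftrightarrow> dyadic x"
  using dyadic_pow[of "2 powi e * x" "-e"] dyadic_pow[of x e] pow2_inv[of e]
  by (auto simp: mult.assoc[symmetric])

section \<open>piecewise predicates\<close>

definition pw :: "(real \<Rightarrow> real \<Rightarrow> bool) \<Rightarrow> real set \<Rightarrow> bool" where
  "pw P S \<longleftrightarrow> finite S \<and> S \<subseteq> {0..1} \<and> 0 \<in> S \<and> 1 \<in> S \<and>
     (\<forall>x y. 0 \<le> x \<and> x < y \<and> y \<le> 1 \<and> (\<forall>s\<in>S. s \<le> x \<or> y \<le> s) \<longrightarrow> P x y)"

definition hered :: "(real \<Rightarrow> real \<Rightarrow> bool) \<Rightarrow> bool" where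
  "hered P \<longleftrightarrow> (\<forall>x y x' y'. P x y \<and> x \<le> x' \<and> x' < y' \<and> y' \<le> y \<longrightarrow> P x' y')"

lemma pw_mono:
  assumes "pw P S" "\<And>x y. 0 \<le> x \<Longrightarrow> x < y \<Longrightarrow> y \<le> 1 \<Longrightarrow> P x y \<Longrightarrow> Q x y"
  shows "pw Q S"
  using assms unfolding pw_def by blast

lemma pwD: "pw P S \<Longrightarrow> 0 \<le> x \<Longrightarrow> x < y \<Longrightarrow> y \<le> 1 \<Longrightarrow> (\<And>s. s \<in> S \<Longrightarrow> s \<le> x \<or> y \<le> s) \<Longrightarrow> P x y"
  unfolding pw_def by blast

lemma seq_to_pw:
  assumes h: "hered P" and a0: "a 0 = 0" and ak: "a k = 1" and inc: "\<forall>i<k. a i < a (Suc i)"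
    and P: "\<forall>i<k. P (a i) (a (Suc i))"
  shows "pw P (a ` {..k})"
proof -
  have mono: "a i \<le> a j" if "i \<le> j" "j \<le> k" for i j
    using that
  proof (induction j)
    case 0 then show ?case by simp
  next
    case (Suc j)
    show ?case
    proof (cases "i = Suc j")
      case True then show ?thesis by simp
    next
      case False
      then have "i \<le> j" using Suc.prems by simp
      then have "a i \<le> a j" using Suc by simp
      moreover have "a j < a (Suc j)" using inc Suc.prems by simp
      ultimately show ?thesis by simp
    qed
  qed
  have range: "a i \<in> {0..1}" if "i \<le> k" for i
    using mono[of 0 i] mono[of i k] that a0 ak by auto
  show ?thesis unfolding pw_def
  proof (intro conjI allI impI)
    show "finite (a ` {..k})" by simp
    show "a ` {..k} \<subseteq> {0..1}" using range by auto
    show "0 \<in> a ` {..k}" using a0 by force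
    show "1 \<in> a ` {..k}" using ak by force
    fix x y assume xy: "0 \<le> x \<and> x < y \<and> y \<le> 1 \<and> (\<forall>s\<in>a ` {..k}. s \<le> x \<or> y \<le> s)"
    define I where "I = {i. i \<le> k \<and> a i \<le> x}"
    have finI: "finite I" unfolding I_def by simp
    have "0 \<in> I" unfolding I_def using a0 xy by simp
    define i where "i = Max I"
    have iI: "i \<in> I" unfolding i_def using finI \<open>0 \<in> I\<close> Max_in by blast
    have imax: "j \<in> I \<Longrightarrow> j \<le> i" for j unfolding i_def using finI by simp
    have "i \<noteq> k" using iI ak xy unfolding I_def by auto
    then have ik: "i < k" using iI unfolding I_def by simp
    have "Suc i \<notin> I" using imax[of "Suc i"] by auto
    then have "x < a (Suc i)" using ik unfolding I_def by auto
    moreover have "a (Suc i) \<le> x \<or> y \<le> a (Suc i)" using xy ik by auto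
    ultimately have "y \<le> a (Suc i)" by linarith
    moreover have "a i \<le> x" using iI unfolding I_def by simp
    moreover have "P (a i) (a (Suc i))" using P ik by simp
    ultimately show "P x y" using h xy unfolding hered_def by blast
  qed
qed

lemma pw_to_seq:
  assumes "pw P S"
  shows "\<exists>a k. a 0 = 0 \<and> a k = 1 \<and> (\<forall>i<k. a i < a (Suc i)) \<and> (\<forall>i\<le>k. a i \<in> S) \<and>
           (\<forall>i<k. P (a i) (a (Suc i)))"
proof -
  have fin: "finite S" and S01: "S \<subseteq> {0..1}" and S0: "0 \<in> S" and S1: "1 \<in> S"
    using assms unfolding pw_def by auto
  define L where "L = sorted_list_of_set S"
  have setL: "set L = S" unfolding L_def using fin by simp
  have sL: "sorted_wrt (<) L" unfolding L_def by simp
  define k where "k = length L - 1"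
  have lt: "L ! i < L ! j" if "i < j" "j < length L" for i j
    using sL that by (simp add: sorted_wrt_iff_nth_less)
  have le: "L ! i \<le> L ! j" if "i \<le> j" "j < length L" for i j
    using lt[of i j] that by (cases "i = j") auto
  have inS: "L ! i \<in> S" if "i < length L" for i using setL that by auto
  have lenpos: "length L > 0" using S0 setL by auto
  have kl: "k < length L" unfolding k_def using lenpos by simp
  obtain j0 where j0: "j0 < length L" "L ! j0 = 0" using S0 setL by (metis in_set_conv_nth)
  obtain j1 where j1: "j1 < length L" "L ! j1 = 1" using S1 setL by (metis in_set_conv_nth)
  have a0: "L ! 0 = 0"
    using le[of 0 j0] j0 inS[of 0] S01 lenpos by force
  have ak: "L ! k = 1"
    using le[of j1 k] j1 inS[of k] S01 kl unfolding k_def by force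
  have ord: "i < j" if "L ! i < L ! j" "i < length L" "j < length L" for i j
    using le[of j i] that by (cases "j \<le> i") auto
  show ?thesis
  proof (intro exI[of _ "\<lambda>i. L ! i"] exI[of _ k] conjI allI impI)
    show "L ! 0 = 0" by (rule a0)
    show "L ! k = 1" by (rule ak)
    fix i
    show "i < k \<Longrightarrow> L ! i < L ! Suc i" using lt kl by simp
    show "i \<le> k \<Longrightarrow> L ! i \<in> S" using inS kl by simp
    assume ik: "i < k"
    show "P (L ! i) (L ! Suc i)"
    proof (rule pwD[OF assms])
      show "0 \<le> L ! i" using inS[of i] ik kl S01 by auto
      show "L ! i < L ! Suc i" using lt ik kl by simp
      show "L ! Suc i \<le> 1" using inS[of "Suc i"] ik kl S01 by auto
      fix s assume "s \<in> S"
      then obtain j where j: "j < length L" "L ! j = s" using setL by (metis in_set_conv_nth)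
      show "s \<le> L ! i \<or> L ! Suc i \<le> s"
      proof (rule ccontr)
        assume "\<not> (s \<le> L ! i \<or> L ! Suc i \<le> s)"
        then have "L ! i < L ! j" "L ! j < L ! Suc i" using j by auto
        then have "i < j" "j < Suc i" using ord j ik kl by auto
        then show False by simp
      qed
    qed
  qed
qed

lemma pw_chain:
  assumes pw: "pw P S"
    and base: "\<And>x y. 0 \<le> x \<Longrightarrow> x < y \<Longrightarrow> y \<le> 1 \<Longrightarrow> P x y \<Longrightarrow> Q x y"
    and step: "\<And>x s y. 0 \<le> x \<Longrightarrow> x < s \<Longrightarrow> s < y \<Longrightarrow> y \<le> 1 \<Longrightarrow> s \<in> S \<Longrightarrow> Q x s \<Longrightarrow> Q s y \<Longrightarrow> Q x y"
  shows "0 \<le> x \<Longrightarrow> x < y \<Longrightarrow> y \<le> 1 \<Longrightarrow> Q x y"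
proof (induction "card {s\<in>S. x < s \<and> s < y}" arbitrary: x y rule: less_induct)
  case less
  have fin: "finite S" using pw unfolding pw_def by auto
  show ?case
  proof (cases "\<exists>s\<in>S. x < s \<and> s < y")
    case False
    then have "P x y" using less.prems by (intro pwD[OF pw]) force+
    then show ?thesis using base less.prems by blast
  next
    case True
    then obtain s where s: "s \<in> S" "x < s" "s < y" by blast
    have c1: "card {t\<in>S. x < t \<and> t < s} < card {t\<in>S. x < t \<and> t < y}"
    proof (rule psubset_card_mono)
      show "finite {t\<in>S. x < t \<and> t < y}" using fin by simp
      show "{t\<in>S. x < t \<and> t < s} \<subset> {t\<in>S. x < t \<and> t < y}" using s by auto
    qed
    have c2: "card {t\<in>S. s < t \<and> t < y} < card {t\<in>S. x < t \<and> t < y}"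
    proof (rule psubset_card_mono)
      show "finite {t\<in>S. x < t \<and> t < y}" using fin by simp
      show "{t\<in>S. s < t \<and> t < y} \<subset> {t\<in>S. x < t \<and> t < y}" using s by auto
    qed
    have "Q x s" using less.hyps[OF c1] less.prems s by simp
    moreover have "Q s y" using less.hyps[OF c2] less.prems s by simp
    ultimately show ?thesis using step less.prems s by blast
  qed
qed



definition aff :: "(real \<Rightarrow> real) \<Rightarrow> real \<Rightarrow> real \<Rightarrow> bool" where
  "aff f x y \<longleftrightarrow> (\<exists>e::int. \<exists>b. \<forall>t\<in>{x..y}. f t = 2 powi e * t + b)"

definition agr :: "(real \<Rightarrow> real) set \<Rightarrow> (real \<Rightarrow> real) \<Rightarrow> real \<Rightarrow> real \<Rightarrow> bool" where
  "agr H f x y \<longleftrightarrow> (\<exists>h\<in>H. \<forall>t\<in>{x..y}. f t = h t)"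

lemma hered_aff: "hered (aff f)"
  unfolding hered_def aff_def by (meson atLeastAtMost_iff order_trans less_imp_le)

lemma hered_agr: "hered (agr H f)"
  unfolding hered_def agr_def by (meson atLeastAtMost_iff order_trans less_imp_le)

definition inF :: "(real \<Rightarrow> real) \<Rightarrow> real set \<Rightarrow> bool" where
  "inF f S \<longleftrightarrow> (\<forall>t. t \<notin> {0..1} \<longrightarrow> f t = t) \<and> f 0 = 0 \<and> f 1 = 1 \<and> S \<subseteq> Collect dyadic \<and> pw (aff f) S"

lemma F_alt: "f \<in> thompsonF \<longleftrightarrow> (\<exists>S. inF f S)"
proof
  assume "f \<in> thompsonF"
  then have f: "\<forall>t. t \<notin> {0..1} \<longrightarrow> f t = t" "f 0 = 0" "f 1 = 1"
    and "\<exists>a k e b. a 0 = 0 \<and> a k = 1 \<and> (\<forall>i<k. a i < a (Suc i)) \<and> (\<forall>i\<le>k. dyadic (a i)) \<and>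
        (\<forall>i<k. \<forall>t\<in>{a i..a (Suc i)}. f t = 2 powi e i * t + b i)"
    unfolding thompsonF_def by simp_all
  then obtain a k e b where a: "a 0 = 0" "a k = 1" "\<forall>i<k. a i < a (Suc i)" "\<forall>i\<le>k. dyadic (a i)"
    and p: "\<forall>i<k. \<forall>t\<in>{a i..a (Suc i)}. f t = 2 powi e i * t + b i"
    by blast
  have "pw (aff f) (a ` {..k})"
  proof (rule seq_to_pw[OF hered_aff a(1,2,3)])
    show "\<forall>i<k. aff f (a i) (a (Suc i))" unfolding aff_def using p by blast
  qed
  moreover have "a ` {..k} \<subseteq> Collect dyadic" using a(4) by auto
  ultimately show "\<exists>S. inF f S" unfolding inF_def using f by blast
next
  assume "\<exists>S. inF f S"
  then obtain S where f: "\<forall>t. t \<notin> {0..1} \<longrightarrow> f t = t" "f 0 = 0" "f 1 = 1"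
    and S: "S \<subseteq> Collect dyadic" "pw (aff f) S" unfolding inF_def by blast
  obtain a k where a: "a 0 = 0" "a k = 1" "\<forall>i<k. a i < a (Suc i)" "\<forall>i\<le>k. a i \<in> S"
    "\<forall>i<k. aff f (a i) (a (Suc i))"
    using pw_to_seq[OF S(2)] by blast
  define e where "e i = (SOME e. \<exists>b. \<forall>t\<in>{a i..a (Suc i)}. f t = 2 powi e * t + b)" for i
  define b where "b i = (SOME b. \<forall>t\<in>{a i..a (Suc i)}. f t = 2 powi e i * t + b)" for i
  have p: "\<forall>t\<in>{a i..a (Suc i)}. f t = 2 powi e i * t + b i" if "i < k" for i
  proof -
    have "\<exists>e b. \<forall>t\<in>{a i..a (Suc i)}. f t = 2 powi e * t + b" using a(5) that unfolding aff_def by blast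
    then have "\<exists>b. \<forall>t\<in>{a i..a (Suc i)}. f t = 2 powi e i * t + b" unfolding e_def by (rule someI_ex)
    then show ?thesis unfolding b_def by (rule someI_ex)
  qed
  have dy: "\<forall>i\<le>k. dyadic (a i)" using a(4) S(1) by auto
  have "\<exists>a k e b. a 0 = 0 \<and> a k = 1 \<and> (\<forall>i<k. a i < a (Suc i)) \<and> (\<forall>i\<le>k. dyadic (a i)) \<and>
        (\<forall>i<k. \<forall>t\<in>{a i..a (Suc i)}. f t = 2 powi e i * t + b i)"
    apply (rule exI[of _ a], rule exI[of _ k], rule exI[of _ e], rule exI[of _ b])
    using a(1-3) dy p by blast
  then show "f \<in> thompsonF" unfolding thompsonF_def using f by simp
qed

lemma Cl_alt: "f \<in> ClF H \<longleftrightarrow> f \<in> thompsonF \<and> (\<exists>S. pw (agr H f) S)"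
proof
  assume "f \<in> ClF H"
  then have f: "f \<in> thompsonF" and "\<exists>a k. a 0 = 0 \<and> a k = 1 \<and> (\<forall>i<k. a i < a (Suc i)) \<and>
      (\<forall>i<k. \<exists>h\<in>H. \<forall>t\<in>{a i..a (Suc i)}. f t = h t)"
    unfolding ClF_def by simp_all
  then obtain a k where a: "a 0 = 0" "a k = 1" "\<forall>i<k. a i < a (Suc i)"
    and p: "\<forall>i<k. \<exists>h\<in>H. \<forall>t\<in>{a i..a (Suc i)}. f t = h t"
    by blast
  have "pw (agr H f) (a ` {..k})"
    by (rule seq_to_pw[OF hered_agr a]) (use p in \<open>simp add: agr_def\<close>)
  then show "f \<in> thompsonF \<and> (\<exists>S. pw (agr H f) S)" using f by blast
next
  assume "f \<in> thompsonF \<and> (\<exists>S. pw (agr H f) S)"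
  then obtain S where f: "f \<in> thompsonF" and S: "pw (agr H f) S" by blast
  obtain a k where a: "a 0 = 0" "a k = 1" "\<forall>i<k. a i < a (Suc i)"
    "\<forall>i<k. agr H f (a i) (a (Suc i))"
    using pw_to_seq[OF S] by blast
  have "\<exists>a k. a 0 = 0 \<and> a k = 1 \<and> (\<forall>i<k. a i < a (Suc i)) \<and>
      (\<forall>i<k. \<exists>h\<in>H. \<forall>t\<in>{a i..a (Suc i)}. f t = h t)"
    apply (rule exI[of _ a], rule exI[of _ k]) using a unfolding agr_def by blast
  then show "f \<in> ClF H" unfolding ClF_def using f by simp
qed

section \<open>Basic properties of elements of F\<close>

lemma F_mono01:
  assumes "f \<in> thompsonF" "0 \<le> x" "x < y" "y \<le> 1" shows "f x < f y"
proof -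
  obtain S where S: "pw (aff f) S" using assms(1) unfolding F_alt inF_def by blast
  show ?thesis
  proof (rule pw_chain[OF S, of "\<lambda>x y. f x < f y"])
    fix x y assume "x < y" "aff f x y"
    then obtain e b where eb: "\<forall>t\<in>{x..y}. f t = 2 powi e * t + b" unfolding aff_def by blast
    have "f x = 2 powi e * x + b" "f y = 2 powi e * y + b" using eb \<open>x < y\<close> by auto
    moreover have "2 powi e * x < 2 powi e * y" using \<open>x < y\<close> pow2_pos by simp
    ultimately show "f x < f y" by simp
  qed (use assms in auto)
qed

lemma F_fix: "f \<in> thompsonF \<Longrightarrow> t \<notin> {0..1} \<Longrightarrow> f t = t"
  and F_0: "f \<in> thompsonF \<Longrightarrow> f 0 = 0"
  and F_1: "f \<in> thompsonF \<Longrightarrow> f 1 = 1"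
  unfolding F_alt inF_def by blast+

lemma F_range: assumes "f \<in> thompsonF" "t \<in> {0..1}" shows "f t \<in> {0..1}"
proof -
  have "f 0 \<le> f t" using F_mono01[OF assms(1), of 0 t] assms by (cases "t = 0") auto
  moreover have "f t \<le> f 1" using F_mono01[OF assms(1), of t 1] assms by (cases "t = 1") auto
  ultimately show ?thesis using F_0[OF assms(1)] F_1[OF assms(1)] by simp
qed

lemma F_strict: assumes "f \<in> thompsonF" "x < y" shows "f x < f y"
proof (cases "x \<in> {0..1}")
  case True
  then show ?thesis
  proof (cases "y \<in> {0..1}")
    case True
    then show ?thesis using F_mono01[OF assms(1), of x y] \<open>x \<in> {0..1}\<close> assms(2) by auto
  next
    case False
    then show ?thesis using F_fix[OF assms(1) False] F_range[OF assms(1) \<open>x \<in> {0..1}\<close>] assms(2) True by auto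
  qed
next
  case False
  then have fx: "f x = x" using F_fix[OF assms(1)] by blast
  show ?thesis
  proof (cases "y \<in> {0..1}")
    case True
    then show ?thesis using fx F_range[OF assms(1) True] assms(2) False by auto
  next
    case False
    then show ?thesis using fx F_fix[OF assms(1) False] assms(2) by simp
  qed
qed

lemma F_le_iff: assumes "f \<in> thompsonF" shows "f x \<le> f y \<longleftrightarrow> x \<le> y"
proof
  assume a: "f x \<le> f y"
  show "x \<le> y"
  proof (rule ccontr)
    assume "\<not> x \<le> y"
    then have "f y < f x" using F_strict[OF assms, of y x] by simp
    then show False using a by simp
  qed
next
  assume "x \<le> y" then show "f x \<le> f y" using F_strict[OF assms, of x y] by (cases "x = y") auto
qed

lemma F_less_iff: "f \<in> thompsonF \<Longrightarrow> f x < f y \<longleftrightarrow> x < y"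
  using F_le_iff[of f y x] by (metis not_le)

lemma F_inj: "f \<in> thompsonF \<Longrightarrow> inj f"
  by (rule linorder_injI) (use F_strict in fastforce)

lemma F_surj01:
  assumes "f \<in> thompsonF" "z \<in> {0..1}" shows "\<exists>t. f t = z"
proof -
  obtain S where S: "pw (aff f) S" using assms(1) unfolding F_alt inF_def by blast
  have "\<forall>z. f 0 \<le> z \<and> z \<le> f 1 \<longrightarrow> (\<exists>t\<in>{0..1}. f t = z)"
  proof (rule pw_chain[OF S, of "\<lambda>x y. \<forall>z. f x \<le> z \<and> z \<le> f y \<longrightarrow> (\<exists>t\<in>{x..y}. f t = z)"])
    fix x y assume "x < y" "aff f x y"
    then obtain e b where eb: "\<forall>t\<in>{x..y}. f t = 2 powi e * t + b" unfolding aff_def by blast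
    have p: "0 < (2::real) powi e" by (rule pow2_pos)
    show "\<forall>z. f x \<le> z \<and> z \<le> f y \<longrightarrow> (\<exists>t\<in>{x..y}. f t = z)"
    proof (intro allI impI)
      fix z assume z: "f x \<le> z \<and> z \<le> f y"
      define t where "t = (z - b) / 2 powi e"
      have fx: "f x = 2 powi e * x + b" "f y = 2 powi e * y + b" using eb \<open>x < y\<close> by auto
      have "x \<le> t" unfolding t_def using z fx p by (simp add: pos_le_divide_eq mult.commute)
      moreover have "t \<le> y" unfolding t_def using z fx p by (simp add: pos_divide_le_eq mult.commute)
      moreover have "2 powi e * t + b = z" unfolding t_def using p by simp
      ultimately have "t \<in> {x..y}" "f t = z" using eb by auto
      then show "\<exists>t\<in>{x..y}. f t = z" by blast
    qed
  next
    fix x s y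
    assume "x < s" "s < y"
      and 1: "\<forall>z. f x \<le> z \<and> z \<le> f s \<longrightarrow> (\<exists>t\<in>{x..s}. f t = z)"
      and 2: "\<forall>z. f s \<le> z \<and> z \<le> f y \<longrightarrow> (\<exists>t\<in>{s..y}. f t = z)"
    show "\<forall>z. f x \<le> z \<and> z \<le> f y \<longrightarrow> (\<exists>t\<in>{x..y}. f t = z)"
    proof (intro allI impI)
      fix z assume z: "f x \<le> z \<and> z \<le> f y"
      show "\<exists>t\<in>{x..y}. f t = z"
      proof (cases "z \<le> f s")
        case True
        then obtain t where "t \<in> {x..s}" "f t = z" using 1 z by blast
        then show ?thesis using \<open>s < y\<close> by auto
      next
        case False
        then have "f s \<le> z \<and> z \<le> f y" using z by simp
        then obtain t where "t \<in> {s..y}" "f t = z" using 2 by blast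
        then show ?thesis using \<open>x < s\<close> by auto
      qed
    qed
  qed auto
  moreover have "f 0 \<le> z \<and> z \<le> f 1" using assms F_0[OF assms(1)] F_1[OF assms(1)] by simp
  ultimately show ?thesis by blast
qed

lemma F_surj: assumes "f \<in> thompsonF" shows "surj f"
proof -
  have "\<exists>t. f t = z" for z
  proof (cases "z \<in> {0..1}")
    case True then show ?thesis using F_surj01[OF assms] by blast
  next
    case False then show ?thesis using F_fix[OF assms False] by blast
  qed
  then have ex: "\<And>z. \<exists>t. f t = z" .
  show ?thesis
  proof (rule surjI)
    fix z show "f (SOME t. f t = z) = z" by (rule someI_ex) (rule ex)
  qed
qed

lemma F_inv_f: "f \<in> thompsonF \<Longrightarrow> inv f (f t) = t"
  by (rule inv_f_f[OF F_inj])

lemma F_f_inv: "f \<in> thompsonF \<Longrightarrow> f (inv f t) = t"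
  by (rule surj_f_inv_f[OF F_surj])

lemma F_inv_strict: "f \<in> thompsonF \<Longrightarrow> x < y \<Longrightarrow> inv f x < inv f y"
  using F_less_iff[of f "inv f x" "inv f y"] F_f_inv[of f] by simp

lemma F_inv_le: "f \<in> thompsonF \<Longrightarrow> x \<le> y \<Longrightarrow> inv f x \<le> inv f y"
  using F_le_iff[of f "inv f x" "inv f y"] F_f_inv[of f] by simp

lemma F_inv_range: assumes "f \<in> thompsonF" "t \<in> {0..1}" shows "inv f t \<in> {0..1}"
proof (rule ccontr)
  assume a: "inv f t \<notin> {0..1}"
  then have "f (inv f t) = inv f t" using F_fix[OF assms(1)] by blast
  then show False using a assms F_f_inv[of f t] by simp
qed

lemma F_inv_fix: assumes "f \<in> thompsonF" "t \<notin> {0..1}" shows "inv f t = t"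
  using F_inv_f[OF assms(1), of t] F_fix[OF assms] by simp

lemma F_dyadic:
  assumes "f \<in> thompsonF" "t \<in> {0..1}" shows "dyadic (f t) \<longleftrightarrow> dyadic t"
proof -
  obtain S where S: "pw (aff f) S" "S \<subseteq> Collect dyadic" using assms(1) unfolding F_alt inF_def by blast
  let ?Q = "\<lambda>x y. dyadic x \<longrightarrow> dyadic (f x) \<longrightarrow> (\<forall>t\<in>{x..y}. dyadic (f t) \<longleftrightarrow> dyadic t)"
  have "?Q 0 1"
  proof (rule pw_chain[OF S(1), of ?Q])
    fix x y assume "x < y" "aff f x y"
    then obtain e b where eb: "\<forall>t\<in>{x..y}. f t = 2 powi e * t + b" unfolding aff_def by blast
    show "?Q x y"
    proof (intro impI ballI)
      fix t assume dx: "dyadic x" "dyadic (f x)" and t: "t \<in> {x..y}"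
      have "f t - f x = 2 powi e * (t - x)" using eb t \<open>x < y\<close> by (auto simp: algebra_simps)
      then have "f t = f x + 2 powi e * (t - x)" "t = x + (t - x)" by simp_all
      then show "dyadic (f t) \<longleftrightarrow> dyadic t"
        using dx dyadic_add dyadic_diff dyadic_pow_iff
        by (metis add_diff_cancel_left')
    qed
  next
    fix x s y assume s: "x < s" "s < y" "s \<in> S" and 1: "?Q x s" and 2: "?Q s y"
    show "?Q x y"
    proof (intro impI ballI)
      fix t assume dx: "dyadic x" "dyadic (f x)" and t: "t \<in> {x..y}"
      have ds: "dyadic s" using s S(2) by auto
      then have dfs: "dyadic (f s)" using 1 dx s by auto
      show "dyadic (f t) \<longleftrightarrow> dyadic t"
      proof (cases "t \<le> s")
        case True then show ?thesis using 1 dx t by auto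
      next
        case False then show ?thesis using 2 ds dfs t by auto
      qed
    qed
  qed auto
  then show ?thesis using assms dyadic_0 F_0[OF assms(1)] by auto
qed



lemma pw_inv:
  assumes f: "f \<in> thompsonF" and P: "pw P S"
  shows "pw (\<lambda>x y. P (inv f x) (inv f y)) (f ` S)"
proof -
  have S: "finite S" "S \<subseteq> {0..1}" "0 \<in> S" "1 \<in> S" using P unfolding pw_def by auto
  show ?thesis unfolding pw_def
  proof (intro conjI allI impI)
    show "finite (f ` S)" using S by simp
    show "f ` S \<subseteq> {0..1}" using S F_range[OF f] by auto
    show "0 \<in> f ` S" using S F_0[OF f] by force
    show "1 \<in> f ` S" using S F_1[OF f] by force
    fix x y assume xy: "0 \<le> x \<and> x < y \<and> y \<le> 1 \<and> (\<forall>s\<in>f ` S. s \<le> x \<or> y \<le> s)"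
    show "P (inv f x) (inv f y)"
    proof (rule pwD[OF P])
      show "0 \<le> inv f x" using F_inv_range[OF f, of x] xy by auto
      show "inv f x < inv f y" using F_inv_strict[OF f] xy by auto
      show "inv f y \<le> 1" using F_inv_range[OF f, of y] xy by auto
      fix s assume "s \<in> S"
      then have "f s \<le> x \<or> y \<le> f s" using xy by auto
      then show "s \<le> inv f x \<or> inv f y \<le> s"
        using F_inv_le[OF f, of "f s" x] F_inv_le[OF f, of y "f s"] F_inv_f[OF f, of s] by auto
    qed
  qed
qed

lemma pw_comp:
  assumes f: "f \<in> thompsonF" and P: "pw P S" and Q: "pw Q T"
  shows "pw (\<lambda>x y. P x y \<and> Q (f x) (f y)) (S \<union> inv f ` T)"
proof -
  have S: "finite S" "S \<subseteq> {0..1}" "0 \<in> S" "1 \<in> S" using P unfolding pw_def by auto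
  have T: "finite T" "T \<subseteq> {0..1}" using Q unfolding pw_def by auto
  show ?thesis unfolding pw_def
  proof (intro conjI)
    show "finite (S \<union> inv f ` T)" using S T by simp
    show "S \<union> inv f ` T \<subseteq> {0..1}" using S T F_inv_range[OF f] by auto
    show "0 \<in> S \<union> inv f ` T" using S by simp
    show "1 \<in> S \<union> inv f ` T" using S by simp
    show "\<forall>x y. 0 \<le> x \<and> x < y \<and> y \<le> 1 \<and> (\<forall>s\<in>S \<union> inv f ` T. s \<le> x \<or> y \<le> s) \<longrightarrow> P x y \<and> Q (f x) (f y)"
    proof (intro allI impI)
      fix x y assume xy: "0 \<le> x \<and> x < y \<and> y \<le> 1 \<and> (\<forall>s\<in>S \<union> inv f ` T. s \<le> x \<or> y \<le> s)"
      show "P x y \<and> Q (f x) (f y)"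
      proof
        show "P x y" by (rule pwD[OF P]) (use xy in auto)
        show "Q (f x) (f y)"
        proof (rule pwD[OF Q])
          show "0 \<le> f x" using F_range[OF f, of x] xy by auto
          show "f x < f y" using F_strict[OF f] xy by auto
          show "f y \<le> 1" using F_range[OF f, of y] xy by auto
          fix t assume "t \<in> T"
          then have "inv f t \<le> x \<or> y \<le> inv f t" using xy by auto
          then show "t \<le> f x \<or> f y \<le> t"
            using F_le_iff[OF f, of "inv f t" x] F_le_iff[OF f, of y "inv f t"] F_f_inv[OF f, of t] by auto
        qed
      qed
    qed
  qed
qed

lemma inv_F: assumes f: "f \<in> thompsonF" shows "inv f \<in> thompsonF"
proof -
  obtain S where S: "S \<subseteq> Collect dyadic" "pw (aff f) S" using f unfolding F_alt inF_def by blast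
  have S01: "S \<subseteq> {0..1}" using S(2) unfolding pw_def by auto
  have "inF (inv f) (f ` S)" unfolding inF_def
  proof (intro conjI allI impI)
    fix t :: real assume "t \<notin> {0..1}" then show "inv f t = t" by (rule F_inv_fix[OF f])
  next
    show "inv f 0 = 0" using F_inv_f[OF f, of 0] F_0[OF f] by simp
    show "inv f 1 = 1" using F_inv_f[OF f, of 1] F_1[OF f] by simp
    show "f ` S \<subseteq> Collect dyadic"
    proof
      fix z assume "z \<in> f ` S"
      then obtain s where s: "s \<in> S" "z = f s" by blast
      then have "dyadic s" "s \<in> {0..1}" using S(1) S01 by auto
      then show "z \<in> Collect dyadic" using F_dyadic[OF f] s by simp
    qed
    show "pw (aff (inv f)) (f ` S)"
    proof (rule pw_mono[OF pw_inv[OF f S(2)]])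
      fix x y assume xy: "0 \<le> x" "x < y" "y \<le> 1" and a: "aff f (inv f x) (inv f y)"
      then obtain e b where eb: "\<forall>t\<in>{inv f x..inv f y}. f t = 2 powi e * t + b" unfolding aff_def by blast
      have "inv f t = 2 powi (-e) * t + (- (2 powi (-e) * b))" if t: "t \<in> {x..y}" for t
      proof -
        have "inv f t \<in> {inv f x..inv f y}" using t F_inv_le[OF f] by auto
        then have "t = 2 powi e * inv f t + b" using eb F_f_inv[OF f, of t] by auto
        then have h: "2 powi e * inv f t = t - b" by simp
        have "inv f t = (2 powi (-e) * 2 powi e) * inv f t" using pow2_inv[of e] by simp
        also have "\<dots> = 2 powi (-e) * (2 powi e * inv f t)" by (simp only: mult.assoc)
        also have "\<dots> = 2 powi (-e) * (t - b)" by (simp only: h)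
        finally show ?thesis by (simp add: algebra_simps)
      qed
      then show "aff (inv f) x y" unfolding aff_def by blast
    qed
  qed
  then show ?thesis unfolding F_alt by blast
qed

lemma comp_F: assumes f: "f \<in> thompsonF" and g: "g \<in> thompsonF" shows "g \<circ> f \<in> thompsonF"
proof -
  obtain S where S: "S \<subseteq> Collect dyadic" "pw (aff f) S" using f unfolding F_alt inF_def by blast
  obtain T where T: "T \<subseteq> Collect dyadic" "pw (aff g) T" using g unfolding F_alt inF_def by blast
  have T01: "T \<subseteq> {0..1}" using T(2) unfolding pw_def by auto
  have fi: "inv f \<in> thompsonF" by (rule inv_F[OF f])
  have "inF (g \<circ> f) (S \<union> inv f ` T)" unfolding inF_def
  proof (intro conjI allI impI)
    fix t :: real assume "t \<notin> {0..1}" then show "(g \<circ> f) t = t" using F_fix[OF f] F_fix[OF g] by simp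
  next
    show "(g \<circ> f) 0 = 0" using F_0[OF f] F_0[OF g] by simp
    show "(g \<circ> f) 1 = 1" using F_1[OF f] F_1[OF g] by simp
    show "S \<union> inv f ` T \<subseteq> Collect dyadic"
    proof
      fix z assume "z \<in> S \<union> inv f ` T"
      then show "z \<in> Collect dyadic"
      proof
        assume "z \<in> S" then show ?thesis using S(1) by auto
      next
        assume "z \<in> inv f ` T"
        then obtain s where s: "s \<in> T" "z = inv f s" by blast
        then have "dyadic s" "s \<in> {0..1}" using T(1) T01 by auto
        then show ?thesis using F_dyadic[OF fi] s by simp
      qed
    qed
    show "pw (aff (g \<circ> f)) (S \<union> inv f ` T)"
    proof (rule pw_mono[OF pw_comp[OF f S(2) T(2)]])
      fix x y assume xy: "0 \<le> x" "x < y" "y \<le> 1" and a: "aff f x y \<and> aff g (f x) (f y)"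
      then obtain e b e' b' where eb: "\<forall>t\<in>{x..y}. f t = 2 powi e * t + b"
        and eb': "\<forall>t\<in>{f x..f y}. g t = 2 powi e' * t + b'" unfolding aff_def by blast
      have "(g \<circ> f) t = 2 powi (e' + e) * t + (2 powi e' * b + b')" if t: "t \<in> {x..y}" for t
      proof -
        have "f t \<in> {f x..f y}" using t F_le_iff[OF f] by auto
        then have "g (f t) = 2 powi e' * f t + b'" using eb' by blast
        also have "\<dots> = 2 powi e' * (2 powi e * t + b) + b'" using eb t by simp
        finally show ?thesis by (simp add: pow2_add algebra_simps)
      qed
      then show "aff (g \<circ> f) x y" unfolding aff_def by blast
    qed
  qed
  then show ?thesis unfolding F_alt by blast
qed

lemma id_F: "id \<in> thompsonF"
proof -
  have "pw (aff id) {0, 1}" unfolding pw_def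
  proof (intro conjI allI impI)
    fix x y :: real
    have "\<forall>t\<in>{x..y}. id t = 2 powi 0 * t + 0" by simp
    then show "aff id x y" unfolding aff_def by blast
  qed auto
  moreover have "{0, 1} \<subseteq> Collect dyadic" using dyadic_0 dyadic_1 by auto
  ultimately have "inF id {0, 1}" unfolding inF_def by simp
  then show ?thesis unfolding F_alt by blast
qed

lemma F_subgroup: "is_subgroupF thompsonF"
  unfolding is_subgroupF_def using id_F comp_F inv_F by blast

lemma less3: "(i::nat) < 3 \<longleftrightarrow> i = 0 \<or> i = 1 \<or> i = 2" by auto
lemma le3: "(i::nat) \<le> 3 \<longleftrightarrow> i = 0 \<or> i = 1 \<or> i = 2 \<or> i = 3" by auto
lemma less4: "(i::nat) < 4 \<longleftrightarrow> i = 0 \<or> i = 1 \<or> i = 2 \<or> i = 3" by auto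
lemma le4: "(i::nat) \<le> 4 \<longleftrightarrow> i = 0 \<or> i = 1 \<or> i = 2 \<or> i = 3 \<or> i = 4" by auto

lemma dyadic_frac: "dyadic (real_of_int p / 2 ^ k)"
  unfolding dyadic_def by blast

lemma x0_F: "x0 \<in> thompsonF"
proof -
  define a :: "nat \<Rightarrow> real" where "a i = [0, 1/4, 1/2, 1] ! i" for i
  define e :: "nat \<Rightarrow> int" where "e i = [1, 0, -1] ! i" for i
  define b :: "nat \<Rightarrow> real" where "b i = [0, 1/4, 1/2] ! i" for i
  have d: "dyadic (1/4)" "dyadic (1/2)"
    using dyadic_frac[of 1 2] dyadic_frac[of 1 1] by simp_all
  have "\<forall>i\<le>3. dyadic (a i)" unfolding le3 a_def using d dyadic_0 dyadic_1 by auto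
  moreover have "\<forall>i<3. a i < a (Suc i)" unfolding less3 a_def by auto
  moreover have "\<forall>i<3. \<forall>t\<in>{a i..a (Suc i)}. x0 t = 2 powi e i * t + b i"
    unfolding less3 a_def e_def b_def x0_def by auto
  moreover have "a 0 = 0" "a 3 = 1" unfolding a_def by simp_all
  moreover have "\<forall>t. t \<notin> {0..1} \<longrightarrow> x0 t = t" "x0 0 = 0" "x0 1 = 1" unfolding x0_def by auto
  ultimately show ?thesis unfolding thompsonF_def mem_Collect_eq
    by (intro conjI exI[of _ a] exI[of _ 3] exI[of _ e] exI[of _ b]) simp_all
qed

lemma x1_F: "x1 \<in> thompsonF"
proof -
  define a :: "nat \<Rightarrow> real" where "a i = [0, 1/2, 5/8, 3/4, 1] ! i" for i
  define e :: "nat \<Rightarrow> int" where "e i = [0, 1, 0, -1] ! i" for i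
  define b :: "nat \<Rightarrow> real" where "b i = [0, -1/2, 1/8, 1/2] ! i" for i
  have d: "dyadic (1/2)" "dyadic (5/8)" "dyadic (3/4)"
    using dyadic_frac[of 1 1] dyadic_frac[of 5 3] dyadic_frac[of 3 2] by simp_all
  have "\<forall>i\<le>4. dyadic (a i)" unfolding le4 a_def using d dyadic_0 dyadic_1 by auto
  moreover have "\<forall>i<4. a i < a (Suc i)" unfolding less4 a_def by auto
  moreover have "\<forall>i<4. \<forall>t\<in>{a i..a (Suc i)}. x1 t = 2 powi e i * t + b i"
    unfolding less4 a_def e_def b_def x1_def by auto
  moreover have "a 0 = 0" "a 4 = 1" unfolding a_def by simp_all
  moreover have "\<forall>t. t \<notin> {0..1} \<longrightarrow> x1 t = t" "x1 0 = 0" "x1 1 = 1" unfolding x1_def by auto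
  ultimately show ?thesis unfolding thompsonF_def mem_Collect_eq
    by (intro conjI exI[of _ a] exI[of _ 4] exI[of _ e] exI[of _ b]) simp_all
qed



lemma sub_pow: "is_subgroupF S \<Longrightarrow> f \<in> S \<Longrightarrow> f ^^ k \<in> S"
proof (induction k)
  case 0 then show ?case unfolding is_subgroupF_def by (simp add: id_def)
next
  case (Suc k)
  then have "f \<circ> f ^^ k \<in> S" unfolding is_subgroupF_def by blast
  then show ?case by (simp only: funpow.simps(2))
qed

lemma genF_sub:
  assumes A: "A \<subseteq> thompsonF"
  shows "is_subgroupF (genF A)" and "A \<subseteq> genF A"
proof -
  let ?C = "{S. is_subgroupF S \<and> A \<subseteq> S}"
  have FC: "thompsonF \<in> ?C" using F_subgroup A by simp
  show "A \<subseteq> genF A" unfolding genF_def by blast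
  show "is_subgroupF (genF A)" unfolding is_subgroupF_def
  proof (intro conjI ballI)
    show "genF A \<subseteq> thompsonF" unfolding genF_def using FC by blast
    show "id \<in> genF A" unfolding genF_def is_subgroupF_def by blast
    fix f assume f: "f \<in> genF A"
    show "inv f \<in> genF A" unfolding genF_def
    proof
      fix S assume "S \<in> ?C"
      then have "f \<in> S" "is_subgroupF S" using f unfolding genF_def by auto
      then show "inv f \<in> S" unfolding is_subgroupF_def by blast
    qed
    fix g assume g: "g \<in> genF A"
    show "g \<circ> f \<in> genF A" unfolding genF_def
    proof
      fix S assume "S \<in> ?C"
      then have "f \<in> S" "g \<in> S" "is_subgroupF S" using f g unfolding genF_def by auto
      then show "g \<circ> f \<in> S" unfolding is_subgroupF_def by blast
    qed
  qed
qed

lemma yF_F: "yF \<in> thompsonF"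
  unfolding yF_def using comp_F x0_F x1_F by (metis comp_assoc)

lemma Hmn_props:
  shows "is_subgroupF (Hmn m n)" "xF ^^ m \<in> Hmn m n" "yF ^^ n \<in> Hmn m n"
proof -
  have xm: "xF ^^ m \<in> thompsonF" using sub_pow[OF F_subgroup] x0_F unfolding xF_def by blast
  have yn: "yF ^^ n \<in> thompsonF" using sub_pow[OF F_subgroup] yF_F by blast
  have A: "{xF ^^ m, yF ^^ n} \<subseteq> thompsonF" using xm yn by simp
  show "is_subgroupF (Hmn m n)" unfolding Hmn_def by (rule genF_sub(1)[OF A])
  show "xF ^^ m \<in> Hmn m n" "yF ^^ n \<in> Hmn m n" unfolding Hmn_def using genF_sub(2)[OF A] by auto
qed

lemma H_sub_Cl: assumes "H \<subseteq> thompsonF" shows "H \<subseteq> ClF H"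
proof
  fix h assume h: "h \<in> H"
  have "pw (agr H h) {0, 1}" unfolding pw_def
  proof (intro conjI allI impI)
    fix x y :: real
    show "agr H h x y" unfolding agr_def using h by blast
  qed auto
  then show "h \<in> ClF H" unfolding Cl_alt using h assms by blast
qed

lemma Cl_F: "f \<in> ClF H \<Longrightarrow> f \<in> thompsonF"
  unfolding Cl_alt by blast

lemma Cl_subgroup: assumes H: "is_subgroupF H" shows "is_subgroupF (ClF H)"
proof -
  have HF: "H \<subseteq> thompsonF" using H unfolding is_subgroupF_def by blast
  have Hc: "\<And>f g. f \<in> H \<Longrightarrow> g \<in> H \<Longrightarrow> g \<circ> f \<in> H" using H unfolding is_subgroupF_def by blast
  have Hi: "\<And>f. f \<in> H \<Longrightarrow> inv f \<in> H" using H unfolding is_subgroupF_def by blast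
  show ?thesis unfolding is_subgroupF_def
  proof (intro conjI ballI)
    show "ClF H \<subseteq> thompsonF" using Cl_F by blast
    show "id \<in> ClF H" using H H_sub_Cl[OF HF] unfolding is_subgroupF_def by blast
  next
    fix f g assume f: "f \<in> ClF H" and g: "g \<in> ClF H"
    have fF: "f \<in> thompsonF" using Cl_F[OF f] .
    have gF: "g \<in> thompsonF" using Cl_F[OF g] .
    obtain S where S: "pw (agr H f) S" using f unfolding Cl_alt by blast
    obtain T where T: "pw (agr H g) T" using g unfolding Cl_alt by blast
    have "pw (agr H (g \<circ> f)) (S \<union> inv f ` T)"
    proof (rule pw_mono[OF pw_comp[OF fF S T]])
      fix x y assume xy: "0 \<le> x" "x < y" "y \<le> 1" and a: "agr H f x y \<and> agr H g (f x) (f y)"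
      then obtain h1 h2 where h: "h1 \<in> H" "h2 \<in> H" and h1: "\<forall>t\<in>{x..y}. f t = h1 t"
        and h2: "\<forall>t\<in>{f x..f y}. g t = h2 t" unfolding agr_def by blast
      have "(g \<circ> f) t = (h2 \<circ> h1) t" if t: "t \<in> {x..y}" for t
      proof -
        have "f t \<in> {f x..f y}" using t F_le_iff[OF fF] by auto
        then have "g (f t) = h2 (f t)" using h2 by blast
        then show ?thesis using h1 t by simp
      qed
      then show "agr H (g \<circ> f) x y" unfolding agr_def using Hc[OF h] by blast
    qed
    then show "g \<circ> f \<in> ClF H" unfolding Cl_alt using comp_F[OF fF gF] by blast
  next
    fix f assume f: "f \<in> ClF H"
    have fF: "f \<in> thompsonF" using Cl_F[OF f] .
    obtain S where S: "pw (agr H f) S" using f unfolding Cl_alt by blast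
    have "pw (agr H (inv f)) (f ` S)"
    proof (rule pw_mono[OF pw_inv[OF fF S]])
      fix x y assume xy: "0 \<le> x" "x < y" "y \<le> 1" and a: "agr H f (inv f x) (inv f y)"
      then obtain h where h: "h \<in> H" and hf: "\<forall>t\<in>{inv f x..inv f y}. f t = h t" unfolding agr_def by blast
      have hF: "h \<in> thompsonF" using h HF by blast
      have "inv f t = inv h t" if t: "t \<in> {x..y}" for t
      proof -
        have "inv f t \<in> {inv f x..inv f y}" using t F_inv_le[OF fF] by auto
        then have "h (inv f t) = t" using hf F_f_inv[OF fF, of t] by auto
        then have "inv h (h (inv f t)) = inv h t" by simp
        then show ?thesis using F_inv_f[OF hF] by simp
      qed
      then show "agr H (inv f) x y" unfolding agr_def using Hi[OF h] by blast
    qed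
    then show "inv f \<in> ClF H" unfolding Cl_alt using inv_F[OF fF] by blast
  qed
qed

lemma pw_refine:
  assumes P: "pw P S"
    and R: "\<And>x y. 0 \<le> x \<Longrightarrow> x < y \<Longrightarrow> y \<le> 1 \<Longrightarrow> P x y \<Longrightarrow>
          \<exists>T. finite T \<and> (\<forall>u v. x \<le> u \<and> u < v \<and> v \<le> y \<and> (\<forall>t\<in>T. t \<le> u \<or> v \<le> t) \<longrightarrow> Q u v)"
  shows "\<exists>S'. pw Q S'"
proof -
  have S: "finite S" "S \<subseteq> {0..1}" "0 \<in> S" "1 \<in> S" using P unfolding pw_def by auto
  define good where "good x y T \<longleftrightarrow> finite T \<and> (\<forall>u v. x \<le> u \<and> u < v \<and> v \<le> y \<and> (\<forall>t\<in>T. t \<le> u \<or> v \<le> t) \<longrightarrow> Q u v)"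
    for x y T
  define TT where "TT p = (SOME T. good (fst p) (snd p) T)" for p
  define PS where "PS = {p \<in> S \<times> S. fst p < snd p \<and> P (fst p) (snd p)}"
  define S' where "S' = S \<union> (\<Union>p\<in>PS. TT p \<inter> {fst p..snd p})"
  have goodTT: "good (fst p) (snd p) (TT p)" if "p \<in> PS" for p
  proof -
    have "fst p \<in> S" "snd p \<in> S" "fst p < snd p" "P (fst p) (snd p)" using that unfolding PS_def by auto
    then have "0 \<le> fst p" "fst p < snd p" "snd p \<le> 1" "P (fst p) (snd p)" using S(2) by auto
    then have "\<exists>T. finite T \<and> (\<forall>u v. fst p \<le> u \<and> u < v \<and> v \<le> snd p \<and> (\<forall>t\<in>T. t \<le> u \<or> v \<le> t) \<longrightarrow> Q u v)"
      by (rule R)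
    then have "\<exists>T. good (fst p) (snd p) T" unfolding good_def .
    then show ?thesis unfolding TT_def by (rule someI_ex)
  qed
  have "PS \<subseteq> S \<times> S" unfolding PS_def by blast
  then have finPS: "finite PS" by (rule finite_subset) (simp add: S(1))
  have "pw Q S'" unfolding pw_def
  proof (intro conjI)
    have "\<forall>p\<in>PS. finite (TT p \<inter> {fst p..snd p})" using goodTT unfolding good_def by blast
    then show "finite S'" unfolding S'_def using finPS S(1) by simp
    show "S' \<subseteq> {0..1}"
    proof
      fix z assume "z \<in> S'"
      then show "z \<in> {0..1}"
      proof (unfold S'_def, elim UnE UN_E)
        assume "z \<in> S" then show ?thesis using S(2) by auto
      next
        fix p assume p: "p \<in> PS" "z \<in> TT p \<inter> {fst p..snd p}"
        then have "fst p \<in> S" "snd p \<in> S" unfolding PS_def by auto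
        then have "0 \<le> fst p" "snd p \<le> 1" using S(2) by auto
        then show ?thesis using p by auto
      qed
    qed
    show "0 \<in> S'" "1 \<in> S'" unfolding S'_def using S by auto
    show "\<forall>u v. 0 \<le> u \<and> u < v \<and> v \<le> 1 \<and> (\<forall>s\<in>S'. s \<le> u \<or> v \<le> s) \<longrightarrow> Q u v"
    proof (intro allI impI)
      fix u v assume uv: "0 \<le> u \<and> u < v \<and> v \<le> 1 \<and> (\<forall>s\<in>S'. s \<le> u \<or> v \<le> s)"
      have uvS: "s \<le> u \<or> v \<le> s" if "s \<in> S" for s using uv that unfolding S'_def by blast
      define L where "L = {s \<in> S. s \<le> u}"
      define Rr where "Rr = {s \<in> S. v \<le> s}"
      have L: "finite L" "L \<noteq> {}" unfolding L_def using S uv by auto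
      have Rr: "finite Rr" "Rr \<noteq> {}" unfolding Rr_def using S uv by auto
      define s1 where "s1 = Max L"
      define s2 where "s2 = Min Rr"
      have s1: "s1 \<in> S" "s1 \<le> u" using Max_in[OF L] unfolding s1_def L_def by auto
      have s2: "s2 \<in> S" "v \<le> s2" using Min_in[OF Rr] unfolding s2_def Rr_def by auto
      have s1max: "s \<le> s1" if "s \<in> S" "s \<le> u" for s using Max_ge[OF L(1)] that unfolding s1_def L_def by auto
      have s2min: "s2 \<le> s" if "s \<in> S" "v \<le> s" for s using Min_le[OF Rr(1)] that unfolding s2_def Rr_def by auto
      have between: "s \<le> s1 \<or> s2 \<le> s" if "s \<in> S" for s
        using uvS[OF that] s1max[OF that] s2min[OF that] by auto
      have lt: "s1 < s2" using s1 s2 uv by auto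
      have Ps: "P s1 s2"
        by (rule pwD[OF P]) (use s1 s2 S(2) lt between in auto)
      have pPS: "(s1, s2) \<in> PS" unfolding PS_def using s1 s2 lt Ps by simp
      have g: "good s1 s2 (TT (s1, s2))" using goodTT[OF pPS] by simp
      show "Q u v"
      proof -
        have "\<forall>t\<in>TT (s1, s2). t \<le> u \<or> v \<le> t"
        proof
          fix t assume t: "t \<in> TT (s1, s2)"
          show "t \<le> u \<or> v \<le> t"
          proof (cases "t \<in> {s1..s2}")
            case True
            then have "t \<in> TT (s1, s2) \<inter> {fst (s1, s2)..snd (s1, s2)}" using t by simp
            then have "t \<in> S'" unfolding S'_def using pPS by blast
            then show ?thesis using uv by blast
          next
            case False
            then show ?thesis using s1 s2 by auto
          qed
        qed
        then show ?thesis using g s1 s2 uv unfolding good_def by blast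
      qed
    qed
  qed
  then show ?thesis by blast
qed

lemma Cl_closed: assumes H: "is_subgroupF H" shows "closedF (ClF H)"
proof -
  have K: "is_subgroupF (ClF H)" by (rule Cl_subgroup[OF H])
  have "ClF (ClF H) \<subseteq> ClF H"
  proof
    fix f assume f: "f \<in> ClF (ClF H)"
    have fF: "f \<in> thompsonF" using Cl_F[OF f] .
    obtain S where S: "pw (agr (ClF H) f) S" using f unfolding Cl_alt by blast
    have "\<exists>S'. pw (agr H f) S'"
    proof (rule pw_refine[OF S])
      fix x y assume xy: "0 \<le> x" "x < y" "y \<le> 1" and a: "agr (ClF H) f x y"
      then obtain g where g: "g \<in> ClF H" and fg: "\<forall>t\<in>{x..y}. f t = g t" unfolding agr_def by blast
      obtain T where T: "pw (agr H g) T" using g unfolding Cl_alt by blast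
      have "finite T" using T unfolding pw_def by simp
      moreover have "agr H f u v" if uv: "x \<le> u" "u < v" "v \<le> y" "\<forall>t\<in>T. t \<le> u \<or> v \<le> t" for u v
      proof -
        have "agr H g u v" by (rule pwD[OF T]) (use uv xy in auto)
        then obtain h where "h \<in> H" "\<forall>t\<in>{u..v}. g t = h t" unfolding agr_def by blast
        then show ?thesis unfolding agr_def using fg uv by force
      qed
      ultimately show "\<exists>T. finite T \<and> (\<forall>u v. x \<le> u \<and> u < v \<and> v \<le> y \<and> (\<forall>t\<in>T. t \<le> u \<or> v \<le> t) \<longrightarrow> agr H f u v)"
        by blast
    qed
    then show "f \<in> ClF H" unfolding Cl_alt using fF by blast
  qed
  moreover have "ClF H \<subseteq> ClF (ClF H)" by (rule H_sub_Cl) (use Cl_F in blast)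
  ultimately show ?thesis unfolding closedF_def by blast
qed

theorem lemma3p3:
  fixes m n :: nat
  assumes "1 \<le> m" and "1 \<le> n"
  shows "Kmn m n \<subseteq> ClF (Hmn m n)"
proof -
  let ?H = "Hmn m n"
  let ?K = "ClF ?H"
  have H: "is_subgroupF ?H" by (rule Hmn_props)
  have HF: "?H \<subseteq> thompsonF" using H unfolding is_subgroupF_def by blast
  have HK: "?H \<subseteq> ?K" by (rule H_sub_Cl[OF HF])
  have K: "is_subgroupF ?K" by (rule Cl_subgroup[OF H])
  have cK: "closedF ?K" by (rule Cl_closed[OF H])
  have gK: "goodH m n ?K" unfolding goodH_def
  proof (intro conjI)
    show "id \<in> ?K" "\<forall>f\<in>?K. \<forall>g\<in>?K. g \<circ> f \<in> ?K" "\<forall>f\<in>?K. inv f \<in> ?K"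
      using K unfolding is_subgroupF_def by blast+
    show "\<forall>f\<in>?K. inj f" using Cl_F F_inj by blast
    show "xF ^^ m \<in> ?K" "yF ^^ n \<in> ?K" using Hmn_props HK by blast+
  qed
  have "Kconds m n ?K" by (rule Kconds_good[OF gK assms(1)])
  then have "?K \<in> {K. is_subgroupF K \<and> closedF K \<and> Kconds m n K}" using K cK by simp
  then show ?thesis unfolding Kmn_def by (rule Inter_lower)
qed


end
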